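(* Let $\mathbb{P}_w$ be a distribution on $\mathbb{R}$ that is symmetric around zero, let $\boldsymbol{U}\in\mathbb{R}^{n\times n}$ be positive semi-definite, and let $\boldsymbol{w}=(w_1,\ldots,w_n)^\top$ have i.i.d. entries from $\mathbb{P}_w$. Then for any $\delta>0$, $$\mathbb{P}\bigl(\boldsymbol{w}^\top\boldsymbol{U}\boldsymbol{w}>\delta\|\boldsymbol{w}\|_2^2\bigr)\le\frac{\mathrm{tr}[\boldsymbol{U}]}{\delta n}.$$ *)

theory Defs
  imports "HOL-Analysis.Analysis" "HOL-Probability.Probability"
begin

definition psd :: "real^'n^'n \<Rightarrow> bool" where
  "psd U \<longleftrightarrow> transpose U = U \<and> (\<forall>x. 0 \<le> x \<bullet> (U *v x))"

definition symmetric_distribution :: "real measure \<Rightarrow> bool" where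
  "symmetric_distribution M \<longleftrightarrow> prob_space M \<and> sets M = sets borel \<and> distr M borel uminus = M"

end

theory Submission
  imports Defs
begin

lemma distr_coordwise:
  fixes Pw :: "real measure" and f :: "'n::finite \<Rightarrow> real \<Rightarrow> real"
  assumes P: "prob_space Pw" and S: "sets Pw = sets borel"
    and fm: "\<And>i. f i \<in> borel_measurable borel" and fd: "\<And>i. distr Pw borel (f i) = Pw"
  shows "distr (PiM UNIV (\<lambda>i. Pw)) (PiM UNIV (\<lambda>i. Pw)) (\<lambda>w i. f i (w i)) = PiM UNIV (\<lambda>i. Pw)"
proof -
  interpret product_prob_space "\<lambda>i. Pw" UNIV
    by (intro product_prob_space.intro product_sigma_finite.intro product_prob_space_axioms.intro prob_space_imp_sigma_finite P)
  have sp: "space Pw = UNIV" using sets_eq_imp_space_eq[OF S] by simp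
  have fm': "f i \<in> measurable Pw Pw" for i
    using fm[of i] by (simp add: measurable_def S sp)
  have meas: "(\<lambda>w i. f i (w i)) \<in> measurable (PiM UNIV (\<lambda>i. Pw)) (PiM UNIV (\<lambda>i. Pw))"
    proof (rule measurable_PiM_single')
    fix i :: 'n
    show "(\<lambda>w. f i (w i)) \<in> measurable (PiM UNIV (\<lambda>i. Pw)) Pw"
      using measurable_compose[OF measurable_component_singleton[of i UNIV "\<lambda>i. Pw"] fm'[of i]] by simp
  qed (auto simp: sp)
  show ?thesis
  proof (rule PiM_eqI)
    show "finite (UNIV::'n set)" by simp
    show "sets (distr (PiM UNIV (\<lambda>i. Pw)) (PiM UNIV (\<lambda>i. Pw)) (\<lambda>w i. f i (w i))) = sets (PiM UNIV (\<lambda>i. Pw))"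
      by simp
    fix A :: "'n \<Rightarrow> real set" assume A: "\<And>i. i \<in> UNIV \<Longrightarrow> A i \<in> sets Pw"
    have pre: "(\<lambda>w i. f i (w i)) -` PiE (UNIV::'n set) A \<inter> space (PiM UNIV (\<lambda>i. Pw)) = PiE UNIV (\<lambda>i. f i -` A i \<inter> space Pw)"
      by (auto simp: space_PiM sp PiE_iff)
    have e: "emeasure Pw (f i -` A i \<inter> space Pw) = emeasure Pw (A i)" for i
    proof -
      have "emeasure Pw (A i) = emeasure (distr Pw borel (f i)) (A i)" using fd[of i] by simp
      also have "\<dots> = emeasure Pw (f i -` A i \<inter> space Pw)"
        using A[of i] S fm[of i] by (subst emeasure_distr) (auto simp: measurable_def S sp)
      finally show ?thesis by simp
    qed
    have "emeasure (distr (PiM UNIV (\<lambda>i. Pw)) (PiM UNIV (\<lambda>i. Pw)) (\<lambda>w i. f i (w i))) (PiE (UNIV::'n set) A)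
        = emeasure (PiM UNIV (\<lambda>i. Pw)) (PiE UNIV (\<lambda>i. f i -` A i \<inter> space Pw))"
      using A by (subst emeasure_distr[OF meas]) (auto simp: pre intro!: sets_PiM_I_finite)
    also have "\<dots> = (\<Prod>i\<in>UNIV. emeasure Pw (f i -` A i \<inter> space Pw))"
      using A fm' by (subst emeasure_PiM) (auto simp: measurable_sets)
    also have "\<dots> = (\<Prod>i\<in>UNIV. emeasure Pw (A i))" by (simp add: e)
    finally show "emeasure (distr (PiM UNIV (\<lambda>i. Pw)) (PiM UNIV (\<lambda>i. Pw)) (\<lambda>w i. f i (w i))) (PiE (UNIV::'n set) A) = (\<Prod>i\<in>UNIV. emeasure Pw (A i))" .
  qed
qed


definition swp :: "'a \<Rightarrow> 'a \<Rightarrow> 'a \<Rightarrow> 'a" where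
  "swp a b n = (if n = a then b else if n = b then a else n)"

lemma swp_inv[simp]: "swp a b (swp a b n) = n"
  by (auto simp: swp_def)

lemma inj_swp: "inj (swp a b)"
  by (metis injI swp_inv)

lemma surj_swp: "surj (swp a b)"
  by (metis surjI swp_inv)

lemma coord_meas:
  fixes Pw :: "real measure"
  assumes S: "sets Pw = sets borel"
  shows "(\<lambda>w. w i) \<in> borel_measurable (PiM (UNIV::'n set) (\<lambda>i. Pw))"
proof -
  have "(\<lambda>w. w i) \<in> measurable (PiM (UNIV::'n set) (\<lambda>i. Pw)) Pw"
    by (rule measurable_component_singleton) simp
  then show ?thesis using measurable_cong_sets[OF refl S] by blast
qed

lemma coordwise_meas:
  fixes Pw :: "real measure" and f :: "'n \<Rightarrow> real \<Rightarrow> real"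
  assumes S: "sets Pw = sets borel" and fm: "\<And>i. f i \<in> borel_measurable borel"
  shows "(\<lambda>w i. f i (w i)) \<in> measurable (PiM UNIV (\<lambda>i. Pw)) (PiM UNIV (\<lambda>i. Pw))"
proof -
  have sp: "space Pw = UNIV" using sets_eq_imp_space_eq[OF S] by simp
  have fm': "f i \<in> measurable Pw Pw" for i
    using fm[of i] by (simp add: measurable_def S sp)
  show ?thesis
  proof (rule measurable_PiM_single')
    fix i :: 'n
    show "(\<lambda>w. f i (w i)) \<in> measurable (PiM UNIV (\<lambda>i. Pw)) Pw"
      using measurable_compose[OF measurable_component_singleton[of i UNIV "\<lambda>i. Pw"] fm'[of i]] by simp
  qed (auto simp: sp)
qed

lemma swap_meas:
  fixes Pw :: "real measure" and t :: "'n \<Rightarrow> 'n"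
  shows "(\<lambda>w n. w (t n)) \<in> measurable (PiM UNIV (\<lambda>i. Pw)) (PiM UNIV (\<lambda>i. Pw))"
proof (rule measurable_PiM_single')
  fix i :: 'n
  show "(\<lambda>w. w (t i)) \<in> measurable (PiM UNIV (\<lambda>i. Pw)) Pw"
    by (rule measurable_component_singleton) simp
qed (auto simp: space_PiM)

lemma swap_distr:
  fixes Pw :: "real measure" and t :: "'n \<Rightarrow> 'n"
  assumes P: "prob_space Pw" and t: "inj t"
  shows "distr (PiM UNIV (\<lambda>i. Pw)) (PiM UNIV (\<lambda>i. Pw)) (\<lambda>w n. w (t n)) = PiM UNIV (\<lambda>i. Pw)"
  using distr_PiM_reindex[of UNIV "\<lambda>i. Pw" t UNIV] P t by (simp add: restrict_UNIV)

lemma quad_eq: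
  fixes U :: "real^'n^'n"
  shows "vec_lambda w \<bullet> (U *v vec_lambda w) = (\<Sum>i\<in>UNIV. \<Sum>j\<in>UNIV. U$i$j * (w i * w j))"
  by (simp add: inner_vec_def matrix_vector_mult_def sum_distrib_left mult_ac)

lemma norm_eq:
  shows "(norm (vec_lambda w :: real^'n))\<^sup>2 = (\<Sum>i\<in>UNIV. (w i)\<^sup>2)"
  unfolding power2_norm_eq_inner by (simp add: inner_vec_def power2_eq_square)

lemma diag_nonneg:
  fixes U :: "real^'n^'n"
  assumes "psd U"
  shows "0 \<le> U$i$i"
proof -
  have "0 \<le> axis i 1 \<bullet> (U *v axis i 1)" using assms by (simp add: psd_def)
  also have "axis i 1 \<bullet> (U *v axis i 1) = U$i$i"
    using cart_eq_inner_axis[of "U *v axis i 1" i] by (simp add: matrix_vector_mult_basis column_def inner_commute)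
  finally show ?thesis .
qed

theorem lemma4:
  fixes Pw :: "real measure" and U :: "real^'n^'n" and \<delta> :: real
  assumes "symmetric_distribution Pw"
    and "psd U"
    and "\<delta> > 0"
  shows "measure (PiM UNIV (\<lambda>i::'n. Pw))
           {w \<in> space (PiM UNIV (\<lambda>i::'n. Pw)).
              vec_lambda w \<bullet> (U *v vec_lambda w) > \<delta> * (norm (vec_lambda w))\<^sup>2}
         \<le> trace U / (\<delta> * real CARD('n))"
proof -
  have P: "prob_space Pw" and S: "sets Pw = sets borel" and D: "distr Pw borel uminus = Pw"
    using assms(1) by (auto simp: symmetric_distribution_def)
  define M where "M = PiM UNIV (\<lambda>i::'n. Pw)"
  interpret prob_space M unfolding M_def by (rule prob_space_PiM) (rule P)
  have sp: "space Pw = UNIV" using sets_eq_imp_space_eq[OF S] by simp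
  have spM: "space M = UNIV" by (auto simp: M_def space_PiM sp)
  have cm[measurable]: "(\<lambda>w. w i) \<in> borel_measurable M" for i
    unfolding M_def by (rule coord_meas[OF S])
  define N where "N w = (\<Sum>i\<in>UNIV. (w i)\<^sup>2)" for w :: "'n \<Rightarrow> real"
  define Y where "Y i j w = w i * w j / N w" for i j and w :: "'n \<Rightarrow> real"
  define X where "X w = (\<Sum>i\<in>UNIV. \<Sum>j\<in>UNIV. U$i$j * Y i j w)" for w
  have Nm[measurable]: "N \<in> borel_measurable M" unfolding N_def[abs_def] by measurable
  have Ym[measurable]: "Y i j \<in> borel_measurable M" for i j unfolding Y_def[abs_def] by measurable
  have Xm[measurable]: "X \<in> borel_measurable M" unfolding X_def[abs_def] by measurable
  have N0: "0 \<le> N w" for w unfolding N_def by (simp add: sum_nonneg)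
  have Nge: "(w i)\<^sup>2 \<le> N w" for w i unfolding N_def
    by (rule member_le_sum) auto
  have Yb: "norm (Y i j w) \<le> 1" for i j w
  proof (cases "N w = 0")
    case True then show ?thesis by (simp add: Y_def)
  next
    case False
    then have Np: "N w > 0" using N0[of w] by simp
    have "\<bar>w i * w j\<bar> \<le> ((w i)\<^sup>2 + (w j)\<^sup>2) / 2"
      using sum_squares_bound[of "\<bar>w i\<bar>" "\<bar>w j\<bar>"] by (simp add: abs_mult)
    also have "\<dots> \<le> N w" using Nge[of w i] Nge[of w j] by simp
    finally show ?thesis using Np by (simp add: Y_def abs_divide)
  qed
  have Yi: "integrable M (Y i j)" for i j
    by (rule integrable_const_bound[where B=1]) (auto intro!: AE_I2 simp: Yb[unfolded real_norm_def])
  have Xi: "integrable M X" unfolding X_def[abs_def] using Yi by auto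
  have QX: "vec_lambda w \<bullet> (U *v vec_lambda w) = X w * N w" if "N w \<noteq> 0" for w
    using that by (simp add: quad_eq X_def Y_def sum_distrib_right)
  have X0: "0 \<le> X w" for w
  proof (cases "N w = 0")
    case True then show ?thesis by (simp add: X_def Y_def)
  next
    case False
    have "0 \<le> vec_lambda w \<bullet> (U *v vec_lambda w)" using assms(2) by (simp add: psd_def)
    then show ?thesis using QX[OF False] N0[of w] False
      by (simp add: zero_le_mult_iff)
  qed
  have sub: "{w \<in> space M. vec_lambda w \<bullet> (U *v vec_lambda w) > \<delta> * (norm (vec_lambda w))\<^sup>2}
      \<subseteq> {w \<in> space M. X w \<ge> \<delta>}"
  proof safe
    fix w assume w: "w \<in> space M" "vec_lambda w \<bullet> (U *v vec_lambda w) > \<delta> * (norm (vec_lambda w))\<^sup>2"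
    have "N w \<noteq> 0"
    proof
      assume "N w = 0"
      then have "\<forall>i\<in>UNIV. (w i)\<^sup>2 = 0" unfolding N_def by (subst sum_nonneg_eq_0_iff[symmetric]) auto
      then have "w = (\<lambda>_. 0)" by auto
      then show False using w(2) by (simp add: quad_eq norm_eq)
    qed
    then have "N w > 0" using N0[of w] by simp
    then show "\<delta> \<le> X w" using w(2) QX[OF \<open>N w \<noteq> 0\<close>] by (simp add: norm_eq N_def[symmetric])
  qed
  have step1: "measure M {w \<in> space M. vec_lambda w \<bullet> (U *v vec_lambda w) > \<delta> * (norm (vec_lambda w))\<^sup>2}
      \<le> measure M {w \<in> space M. X w \<ge> \<delta>}"
    by (rule finite_measure_mono[OF sub]) measurable
  have step2: "measure M {w \<in> space M. X w \<ge> \<delta>} \<le> (\<integral>w. X w \<partial>M) / \<delta>"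
    by (rule integral_Markov_inequality_measure[OF Xi _ _ assms(3), where A="space M"]) (auto simp: X0)
  have off: "(\<integral>w. Y i j w \<partial>M) = 0" if "i \<noteq> j" for i j
  proof -
    define f where "f k = (if k = i then uminus else (\<lambda>x::real. x))" for k
    have fm: "f k \<in> borel_measurable borel" for k by (simp add: f_def)
    have fd: "distr Pw borel (f k) = Pw" for k
      using D distr_id2[OF S[symmetric]] by (simp add: f_def)
    define T where "T w = (\<lambda>k. f k (w k))" for w :: "'n \<Rightarrow> real"
    have Tm: "T \<in> measurable M M" unfolding M_def T_def[abs_def] by (rule coordwise_meas[OF S fm])
    have Td: "distr M M T = M" unfolding M_def T_def[abs_def] by (rule distr_coordwise[OF P S fm fd])
    have NT: "N (T w) = N w" for w unfolding N_def T_def f_def by (intro sum.cong) auto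
    have YT: "Y i j (T w) = - Y i j w" for w using that by (simp add: Y_def NT) (simp add: T_def f_def)
    have "(\<integral>w. Y i j w \<partial>M) = (\<integral>w. Y i j w \<partial>distr M M T)" by (simp add: Td)
    also have "\<dots> = (\<integral>w. Y i j (T w) \<partial>M)" by (rule integral_distr[OF Tm]) measurable
    also have "\<dots> = - (\<integral>w. Y i j w \<partial>M)" by (simp add: YT)
    finally show ?thesis by simp
  qed
  obtain k0 :: 'n where True by blast
  define c where "c = (\<integral>w. Y k0 k0 w \<partial>M)"
  have diag: "(\<integral>w. Y k k w \<partial>M) = c" for k
  proof -
    define T where "T w = (\<lambda>n. w (swp k k0 n))" for w :: "'n \<Rightarrow> real"
    have Tm: "T \<in> measurable M M" unfolding M_def T_def[abs_def] by (rule swap_meas)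
    have Td: "distr M M T = M" unfolding M_def T_def[abs_def] by (rule swap_distr[OF P inj_swp])
    have NT: "N (T w) = N w" for w
    proof -
      have "N w = (\<Sum>n\<in>swp k k0 ` UNIV. (w n)\<^sup>2)" unfolding N_def using surj_swp[of k k0] by simp
      also have "\<dots> = N (T w)" unfolding N_def T_def by (subst sum.reindex[OF inj_swp]) simp
      finally show ?thesis by simp
    qed
    have YT: "Y k0 k0 (T w) = Y k k w" for w by (simp add: Y_def NT) (simp add: T_def swp_def)
    have "c = (\<integral>w. Y k0 k0 w \<partial>distr M M T)" by (simp add: Td c_def)
    also have "\<dots> = (\<integral>w. Y k0 k0 (T w) \<partial>M)" by (rule integral_distr[OF Tm]) measurable
    also have "\<dots> = (\<integral>w. Y k k w \<partial>M)" by (simp add: YT)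
    finally show ?thesis by simp
  qed
  have c0: "0 \<le> c" unfolding c_def Y_def
    by (rule integral_nonneg_AE) (auto simp: N0 power2_eq_square[symmetric])
  have "real CARD('n) * c = (\<Sum>k\<in>UNIV. (\<integral>w. Y k k w \<partial>M))" by (simp add: diag)
  also have "\<dots> = (\<integral>w. (\<Sum>k\<in>UNIV. Y k k w) \<partial>M)" using Yi by (simp add: integral_sum)
  also have "\<dots> \<le> (\<integral>w. 1 \<partial>M)"
  proof (rule integral_mono)
    show "integrable M (\<lambda>w. \<Sum>k\<in>UNIV. Y k k w)" using Yi by auto
    show "integrable M (\<lambda>w. 1::real)" by simp
    fix w
    have "(\<Sum>k\<in>UNIV. Y k k w) = N w / N w" unfolding Y_def N_def
      by (simp add: sum_divide_distrib[symmetric] power2_eq_square)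
    then show "(\<Sum>k\<in>UNIV. Y k k w) \<le> 1" by simp
  qed
  also have "\<dots> = 1" by (simp add: prob_space)
  finally have cle: "real CARD('n) * c \<le> 1" .
  have EX: "(\<integral>w. X w \<partial>M) = trace U * c"
  proof -
    have "(\<integral>w. X w \<partial>M) = (\<Sum>i\<in>UNIV. \<Sum>j\<in>UNIV. U$i$j * (\<integral>w. Y i j w \<partial>M))"
      unfolding X_def using Yi by (simp add: integral_sum)
    also have "\<dots> = (\<Sum>i\<in>UNIV. \<Sum>j\<in>UNIV. (if j = i then U$i$i * c else 0))"
      by (intro sum.cong refl) (auto simp: off diag)
    also have "\<dots> = trace U * c" by (simp add: trace_def sum_distrib_right)
    finally show ?thesis .
  qed
  have tr0: "0 \<le> trace U" unfolding trace_def using diag_nonneg[OF assms(2)] by (simp add: sum_nonneg)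
  have npos: "real CARD('n) > 0" by simp
  have "trace U * c \<le> trace U / real CARD('n)"
    using mult_left_mono[OF cle tr0] npos by (simp add: field_simps mult_ac)
  then have "(\<integral>w. X w \<partial>M) / \<delta> \<le> trace U / (\<delta> * real CARD('n))"
    using assms(3) EX by (simp add: field_simps divide_right_mono)
  with step1 step2 show ?thesis unfolding M_def by linarith
qed

end
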